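(* Let $\Omega \neq \emptyset$ and let $k: \Omega \times \Omega \to \mathbb{R}$ be a reproducing kernel on $\Omega$ with corresponding reproducing kernel Hilbert space $H$. Let $\mu$ be a $\sigma$-finite measure on $\Omega$ such that $H \subset L^2(\Omega,\mu)$, and let $S: H \to L^2(\Omega,\mu)$, $f \mapsto f$, be the identical embedding (which is continuous). Define the integral operators $T_{H,H}: H \to H$, $T_{H,L^2}: H \to L^2(\Omega,\mu)$ and $T_{L^2,L^2}: L^2(\Omega,\mu) \to L^2(\Omega,\mu)$, all given by the same formula $$f \mapsto \Big( s \mapsto \int_\Omega k(s,t) f(t)\, d\mu(t)\Big).$$ Then the following conditions are equivalent: (1) $S$ is compact; (2) each of the operators $T_{H,H}$, $T_{H,L^2}$, $T_{L^2,L^2}$ is compact (equivalently, at least one of them is compact); (3) for every sequence $(f_n)_{n\in\mathbb{N}} \subset H$ which is bounded in the norm of $H$ and converges pointwise on $\Omega$ to $0$, one has $$\lim_{n\to\infty} \int_\Omega \Big( \int_\Omega k(s,t) f_n(t)\, d\mu(t)\Big)^2 d\mu(s) = 0.$$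
   Context: A reproducing kernel Hilbert space $H$ on $\Omega$ with kernel $k$ is a Hilbert space of real-valued functions on $\Omega$ such that $k(s,\cdot)\in H$ for all $s\in\Omega$ and $f(s)=\langle f, k(s,\cdot)\rangle_H$ for all $f\in H$, $s\in\Omega$. The condition $H \subset L^2(\Omega,\mu)$ means every $f\in H$ is a representative of an element of $L^2(\Omega,\mu)$; the identical embedding $S$ is then assumed to be a continuous linear operator. *)

theory Defs
  imports "HOL-Analysis.Analysis"
begin

text \<open>The RKHS H is modelled by a real Hilbert space type 'h together with the
  kernel sections feat s = k(s,.) in H; the function represented by h in 'h is
  emb feat h = (\<lambda>s. h \<bullet> feat s) (reproducing property).\<close>

definition emb :: "('a \<Rightarrow> 'h::real_inner) \<Rightarrow> 'h \<Rightarrow> 'a \<Rightarrow> real" where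
  "emb feat h = (\<lambda>s. h \<bullet> feat s)"

definition sqint :: "'a measure \<Rightarrow> ('a \<Rightarrow> real) \<Rightarrow> bool" where
  "sqint M f \<longleftrightarrow> f \<in> borel_measurable M \<and> integrable M (\<lambda>x. (f x)\<^sup>2)"

definition l2norm :: "'a measure \<Rightarrow> ('a \<Rightarrow> real) \<Rightarrow> real" where
  "l2norm M f = sqrt (\<integral>x. (f x)\<^sup>2 \<partial>M)"

definition l2_conv :: "'a measure \<Rightarrow> (nat \<Rightarrow> 'a \<Rightarrow> real) \<Rightarrow> bool" where
  "l2_conv M F \<longleftrightarrow> (\<exists>g. sqint M g \<and> (\<lambda>n. l2norm M (\<lambda>x. F n x - g x)) \<longlonglongrightarrow> 0)"

definition intop :: "'a measure \<Rightarrow> ('a \<Rightarrow> 'a \<Rightarrow> real) \<Rightarrow> ('a \<Rightarrow> real) \<Rightarrow> 'a \<Rightarrow> real" where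
  "intop M k f = (\<lambda>s. \<integral>t. k s t * f t \<partial>M)"

definition compact_S :: "'a measure \<Rightarrow> ('a \<Rightarrow> 'h::real_inner) \<Rightarrow> bool" where
  "compact_S M feat \<longleftrightarrow>
     (\<forall>h::nat \<Rightarrow> 'h. bounded (range h) \<longrightarrow>
        (\<exists>r. strict_mono r \<and> l2_conv M (\<lambda>n. emb feat (h (r n)))))"

definition compact_THH :: "'a measure \<Rightarrow> ('a \<Rightarrow> 'a \<Rightarrow> real) \<Rightarrow> ('a \<Rightarrow> 'h::real_inner) \<Rightarrow> bool" where
  "compact_THH M k feat \<longleftrightarrow>
     (\<forall>h::nat \<Rightarrow> 'h. bounded (range h) \<longrightarrow>
        (\<exists>r G g. strict_mono r \<and>
           (\<forall>n. \<forall>s\<in>space M. emb feat (G n) s = intop M k (emb feat (h (r n))) s) \<and>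
           G \<longlonglongrightarrow> g))"

definition compact_THL :: "'a measure \<Rightarrow> ('a \<Rightarrow> 'a \<Rightarrow> real) \<Rightarrow> ('a \<Rightarrow> 'h::real_inner) \<Rightarrow> bool" where
  "compact_THL M k feat \<longleftrightarrow>
     (\<forall>h::nat \<Rightarrow> 'h. bounded (range h) \<longrightarrow>
        (\<exists>r. strict_mono r \<and> l2_conv M (\<lambda>n. intop M k (emb feat (h (r n))))))"

definition compact_TLL :: "'a measure \<Rightarrow> ('a \<Rightarrow> 'a \<Rightarrow> real) \<Rightarrow> bool" where
  "compact_TLL M k \<longleftrightarrow>
     (\<forall>f::nat \<Rightarrow> 'a \<Rightarrow> real. (\<forall>n. sqint M (f n)) \<and> (\<exists>C. \<forall>n. l2norm M (f n) \<le> C) \<longrightarrow>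
        (\<exists>r. strict_mono r \<and> l2_conv M (\<lambda>n. intop M k (f (r n)))))"

end

theory Submission
  imports Defs "HOL-Library.Diagonal_Subsequence"
begin


lemma quad_nonneg_zero:
  fixes b c :: real
  assumes c: "0 \<le> c" and q: "\<And>t. 0 \<le> 2*t*b + t^2*c"
  shows "b = 0"
proof -
  define t where "t = -b/(c+1)"
  have c1: "c + 1 \<noteq> 0" using c by simp
  have tt: "t*(c+1) = -b" unfolding t_def using c1 by simp
  have "0 \<le> (c+1)^2*(2*t*b + t^2*c)" using q[of t] by simp
  also have "(c+1)^2*(2*t*b + t^2*c) = 2*b*(c+1)*(t*(c+1)) + c*(t*(c+1))^2"
    by (simp add: algebra_simps power2_eq_square)
  also have "\<dots> = 2*b*(c+1)*(-b) + c*(-b)^2" by (simp only: tt)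
  also have "\<dots> = -(b^2*(c+2))" by (simp add: algebra_simps power2_eq_square)
  finally have "b^2 * (c+2) \<le> 0" by simp
  hence "b^2 \<le> 0" using c by (simp add: mult_le_0_iff)
  thus ?thesis by simp
qed

lemma aux_lin: "(A::real) < m + \<alpha> \<Longrightarrow> B < m + \<beta> \<Longrightarrow> m \<le> C \<Longrightarrow> 2*A + 2*B - 4*C \<le> 2*(m+\<alpha>) + 2*(m+\<beta>) - 4*m"
  by (smt (verit))

lemma proj_exists:
  fixes V :: "'h::{real_inner,complete_space} set"
  assumes sub: "subspace V" and cl: "closed V"
  shows "\<exists>p\<in>V. \<forall>y\<in>V. (x - p) \<bullet> y = 0"
proof -
  define D where "D = (\<lambda>v. (norm (x - v))^2) ` V"
  define m where "m = Inf D"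
  have V0: "0 \<in> V" using sub by (simp add: subspace_0)
  have Dne: "D \<noteq> {}" using V0 unfolding D_def by auto
  have Dbd: "bdd_below D" unfolding D_def by (rule bdd_belowI[of _ 0]) auto
  have mle: "m \<le> (norm (x - v))^2" if "v \<in> V" for v
    unfolding m_def D_def using that Dbd unfolding D_def by (auto intro!: cInf_lower)
  have "\<exists>v\<in>V. (norm (x - v))^2 < m + 1/(Suc n)" for n
  proof -
    have "Inf D < m + 1/(Suc n)" unfolding m_def by simp
    then obtain d where "d \<in> D" "d < m + 1/(Suc n)" using cInf_lessD[OF Dne] by blast
    thus ?thesis unfolding D_def by auto
  qed
  then obtain v where vV: "\<And>n. v n \<in> V" and vm: "\<And>n. (norm (x - v n))^2 < m + 1/(Suc n)"
    by metis
  have par: "(norm (v a - v b))^2 \<le> 2/(Suc a) + 2/(Suc b)" for a b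
  proof -
    have mid: "(1/2) *\<^sub>R (v a + v b) \<in> V"
      using vV sub by (simp add: subspace_add subspace_scale)
    have "(norm (v a - v b))^2 = 2*(norm (x - v a))^2 + 2*(norm (x - v b))^2 - 4*(norm (x - (1/2) *\<^sub>R (v a + v b)))^2"
      unfolding power2_norm_eq_inner by (simp add: algebra_simps inner_add_left inner_add_right inner_diff_left inner_diff_right inner_commute)
    also have "\<dots> \<le> 2*(m + 1/(Suc a)) + 2*(m + 1/(Suc b)) - 4*m"
      by (rule aux_lin[OF vm[of a] vm[of b] mle[OF mid]])
    finally show ?thesis by simp
  qed
  have "Cauchy v"
  proof (rule metric_CauchyI)
    fix e :: real assume e: "e > 0"
    obtain N0 :: nat where "4 / e^2 < real N0" using reals_Archimedean2 by blast
    hence N: "4 / e^2 < real (Suc N0)" by simp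
    define N where "N = Suc N0"
    have eN: "4/N < e^2" using N e unfolding N_def by (simp add: field_simps)
    show "\<exists>M. \<forall>a\<ge>M. \<forall>b\<ge>M. dist (v a) (v b) < e"
    proof (intro exI allI impI)
      fix a b assume ab: "a \<ge> N" "b \<ge> N"
      have "2/(Suc a) \<le> 2/N" "2/(Suc b) \<le> 2/N" using ab unfolding N_def by (auto intro!: divide_left_mono)
      hence "(dist (v a) (v b))^2 < e^2" using par[of a b] eN by (simp add: dist_norm)
      thus "dist (v a) (v b) < e" using e by (meson abs_le_square_iff abs_of_pos less_le_not_le not_le zero_le_dist power2_less_imp_less)
    qed
  qed
  then obtain p where vp: "v \<longlonglongrightarrow> p" using Cauchy_convergent_iff convergent_def by blast
  have pV: "p \<in> V" using cl vV vp closed_sequentially by blast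
  have "(\<lambda>n. (norm (x - v n))^2) \<longlonglongrightarrow> (norm (x - p))^2"
    by (intro tendsto_intros vp)
  moreover have "(\<lambda>n. m + 1/(Suc n)) \<longlonglongrightarrow> m + 0"
    by (intro tendsto_add tendsto_const LIMSEQ_Suc[OF lim_1_over_n])
  ultimately have "(norm (x - p))^2 \<le> m"
    using vm by (intro LIMSEQ_le[of "\<lambda>n. (norm (x - v n))^2" _ "\<lambda>n. m + 1/(Suc n)"]) (auto intro: less_imp_le)
  with mle[OF pV] have pm: "(norm (x - p))^2 = m" by simp
  show ?thesis
  proof (intro bexI[OF _ pV] ballI)
    fix y assume yV: "y \<in> V"
    have "0 \<le> 2*t*(-((x-p)\<bullet>y)) + t^2*(y \<bullet> y)" for t
    proof -
      have "p + t *\<^sub>R y \<in> V" using pV yV sub by (simp add: subspace_add subspace_scale)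
      hence "m \<le> (norm (x - (p + t *\<^sub>R y)))^2" by (rule mle)
      also have "\<dots> = ((x-p) \<bullet> (x-p)) + 2*t*(-((x-p)\<bullet>y)) + t^2*(y \<bullet> y)"
        unfolding power2_norm_eq_inner by (simp add: algebra_simps inner_add_left inner_add_right inner_diff_left inner_diff_right inner_commute power2_eq_square)
      finally show ?thesis using pm by (simp add: power2_norm_eq_inner)
    qed
    from quad_nonneg_zero[OF _ this] show "(x - p) \<bullet> y = 0" by simp
  qed
qed
lemma riesz:
  fixes \<phi> :: "'h::{real_inner,complete_space} \<Rightarrow> real"
  assumes bl: "bounded_linear \<phi>"
  shows "\<exists>z. \<forall>y. \<phi> y = z \<bullet> y"
proof (cases "\<forall>y. \<phi> y = 0")
  case True thus ?thesis by (intro exI[of _ 0]) simp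
next
  case False
  then obtain w0 where w0: "\<phi> w0 \<noteq> 0" by blast
  interpret bounded_linear \<phi> by (rule bl)
  define N where "N = {y. \<phi> y = 0}"
  have subN: "subspace N" unfolding N_def subspace_def by (simp add: add scale)
  have clN: "closed N" unfolding N_def
    by (intro closed_Collect_eq continuous_intros continuous_on_const) (simp add: continuous_on linear_continuous_on bl)
  obtain p where pN: "p \<in> N" and orth: "\<And>y. y \<in> N \<Longrightarrow> (w0 - p) \<bullet> y = 0"
    using proj_exists[OF subN clN, of w0] by blast
  define w where "w = w0 - p"
  have pw: "\<phi> w = \<phi> w0" unfolding w_def using pN by (simp add: N_def diff)
  have wnz: "w \<bullet> w \<noteq> 0"
  proof
    assume "w \<bullet> w = 0" hence "w = 0" by simp
    thus False using pw w0 by (simp add: zero)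
  qed
  show ?thesis
  proof (intro exI allI)
    fix y
    have "y - (\<phi> y / \<phi> w) *\<^sub>R w \<in> N" unfolding N_def using pw w0 by (simp add: diff scale)
    hence "w \<bullet> (y - (\<phi> y / \<phi> w) *\<^sub>R w) = 0" using orth unfolding w_def by blast
    hence "w \<bullet> y = (\<phi> y / \<phi> w) * (w \<bullet> w)" by (simp add: inner_diff_right)
    thus "\<phi> y = ((\<phi> w / (w \<bullet> w)) *\<^sub>R w) \<bullet> y" using wnz pw w0 by (simp add: field_simps)
  qed
qed

lemma conv_closed:
  fixes g :: "nat \<Rightarrow> 'h::real_inner"
  assumes B: "\<And>n. norm (g n) \<le> B"
  shows "closed {y. convergent (\<lambda>n. g n \<bullet> y)}"
proof -
  have "y \<in> {y. convergent (\<lambda>n. g n \<bullet> y)}" if y: "y \<in> closure {y. convergent (\<lambda>n. g n \<bullet> y)}" for y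
  proof -
    have B0: "0 \<le> B" using B[of 0] norm_ge_zero order_trans by blast
    have "Cauchy (\<lambda>n. g n \<bullet> y)"
    proof (rule metric_CauchyI)
      fix e :: real assume e: "e > 0"
      obtain z where z: "convergent (\<lambda>n. g n \<bullet> z)" and yz: "dist z y < e / (3*(B+1))"
        using y e B0 unfolding closure_approachable by (metis (no_types, lifting) divide_pos_pos mem_Collect_eq mult_pos_pos zero_less_numeral add_nonneg_pos zero_less_one)
      have "Cauchy (\<lambda>n. g n \<bullet> z)" using z by (simp add: Cauchy_convergent_iff)
      then obtain M where M: "\<And>a b. a \<ge> M \<Longrightarrow> b \<ge> M \<Longrightarrow> dist (g a \<bullet> z) (g b \<bullet> z) < e/3"
        using e unfolding Cauchy_def by (meson divide_pos_pos zero_less_numeral)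
      have gy: "\<bar>g a \<bullet> y - g a \<bullet> z\<bar> \<le> e/3" for a
      proof -
        have "\<bar>g a \<bullet> y - g a \<bullet> z\<bar> = \<bar>g a \<bullet> (y - z)\<bar>" by (simp add: inner_diff_right)
        also have "\<dots> \<le> norm (g a) * norm (y - z)" by (rule Cauchy_Schwarz_ineq2)
        also have "\<dots> \<le> B * (e / (3*(B+1)))" using B[of a] yz B0
          by (intro mult_mono) (auto simp: dist_norm norm_minus_commute)
        also have "\<dots> \<le> e/3" using B0 e by (simp add: field_simps)
        finally show ?thesis .
      qed
      show "\<exists>M. \<forall>a\<ge>M. \<forall>b\<ge>M. dist (g a \<bullet> y) (g b \<bullet> y) < e"
      proof (intro exI allI impI)
        fix a b assume "a \<ge> M" "b \<ge> M"
        from M[OF this] gy[of a] gy[of b] show "dist (g a \<bullet> y) (g b \<bullet> y) < e"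
          unfolding dist_real_def by linarith
      qed
    qed
    thus ?thesis by (simp add: Cauchy_convergent_iff)
  qed
  thus ?thesis using closure_subset_eq by blast
qed


lemma diag_inner:
  fixes h :: "nat \<Rightarrow> 'h::real_inner"
  assumes B: "\<And>n. norm (h n) \<le> B"
  shows "\<exists>r. strict_mono r \<and> (\<forall>m. convergent (\<lambda>n. h (r n) \<bullet> h m))"
proof -
  interpret subseqs "\<lambda>m s. convergent (\<lambda>n. h (s n) \<bullet> h m)"
  proof
    fix m and s :: "nat \<Rightarrow> nat" assume "strict_mono s"
    have "bounded (range (\<lambda>n. h (s n) \<bullet> h m))"
      unfolding bounded_iff
    proof (intro exI ballI)
      fix x assume "x \<in> range (\<lambda>n. h (s n) \<bullet> h m)"
      then obtain n where "x = h (s n) \<bullet> h m" by blast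
      hence "norm x \<le> norm (h (s n)) * norm (h m)" by (simp add: Cauchy_Schwarz_ineq2)
      also have "\<dots> \<le> B * norm (h m)" using B by (simp add: mult_right_mono)
      finally show "norm x \<le> B * norm (h m)" .
    qed
    from bounded_imp_convergent_subsequence[OF this] obtain l r' where
      "strict_mono r'" "((\<lambda>n. h (s n) \<bullet> h m) \<circ> r') \<longlonglongrightarrow> l" by blast
    thus "\<exists>r'. strict_mono r' \<and> convergent (\<lambda>n. h ((s \<circ> r') n) \<bullet> h m)"
      by (intro exI[of _ r']) (auto simp: convergent_def o_def)
  qed
  have "convergent (\<lambda>n. h (diagseq n) \<bullet> h m)" for m
  proof -
    have "convergent (\<lambda>n. h ((diagseq \<circ> (+) (Suc m)) n) \<bullet> h m)"
    proof (rule diagseq_holds)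
      fix r s n assume "strict_mono (r::nat\<Rightarrow>nat)" "convergent (\<lambda>i. h (s i) \<bullet> h n)"
      from convergent_subseq_convergent[OF this(2) this(1)]
      show "convergent (\<lambda>i. h ((s \<circ> r) i) \<bullet> h n)" by (simp add: o_def)
    qed
    then obtain l where "(\<lambda>n. h (diagseq (n + Suc m)) \<bullet> h m) \<longlonglongrightarrow> l"
      unfolding convergent_def by (auto simp: o_def add.commute)
    from LIMSEQ_offset[OF this] show ?thesis unfolding convergent_def by blast
  qed
  thus ?thesis using subseq_diagseq by blast
qed

lemma weak_compact:
  fixes h :: "nat \<Rightarrow> 'h::{real_inner,complete_space}"
  assumes B: "\<And>n. norm (h n) \<le> B"
  shows "\<exists>r x. strict_mono r \<and> (\<forall>y. (\<lambda>n. h (r n) \<bullet> y) \<longlonglongrightarrow> x \<bullet> y)"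
proof -
  obtain r where r: "strict_mono r" and cr: "\<And>m. convergent (\<lambda>n. h (r n) \<bullet> h m)"
    using diag_inner[of h B, OF B] by blast
  define g where "g n = h (r n)" for n
  have gB: "norm (g n) \<le> B" for n unfolding g_def by (rule B)
  define V where "V = {y. convergent (\<lambda>n. g n \<bullet> y)}"
  have subV: "subspace V" unfolding subspace_def V_def
  proof (intro conjI ballI allI; clarify?)
    show "convergent (\<lambda>n. g n \<bullet> 0)" by (simp add: convergent_const)
  next
    fix x y assume "convergent (\<lambda>n. g n \<bullet> x)" "convergent (\<lambda>n. g n \<bullet> y)"
    thus "convergent (\<lambda>n. g n \<bullet> (x + y))" unfolding convergent_def inner_add_right
      by (auto intro: tendsto_add)
  next
    fix c :: real and x assume "convergent (\<lambda>n. g n \<bullet> x)"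
    thus "convergent (\<lambda>n. g n \<bullet> (c *\<^sub>R x))" unfolding convergent_def inner_scaleR_right
      by (auto intro: tendsto_mult_left)
  qed
  have clV: "closed V" unfolding V_def by (rule conv_closed[OF gB])
  have hV: "h m \<in> V" for m unfolding V_def g_def using cr[of m] by simp
  have conv: "convergent (\<lambda>n. g n \<bullet> y)" for y
  proof -
    obtain p where pV: "p \<in> V" and orth: "\<And>v. v \<in> V \<Longrightarrow> (y - p) \<bullet> v = 0"
      using proj_exists[OF subV clV, of y] by blast
    have "g n \<bullet> y = g n \<bullet> p" for n
    proof -
      have "(y - p) \<bullet> g n = 0" using orth hV unfolding g_def by blast
      thus ?thesis by (simp add: inner_diff_left inner_diff_right inner_commute[of "g n"])
    qed
    thus ?thesis using pV unfolding V_def by simp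
  qed
  define \<psi> where "\<psi> y = lim (\<lambda>n. g n \<bullet> y)" for y
  have lim\<psi>: "(\<lambda>n. g n \<bullet> y) \<longlonglongrightarrow> \<psi> y" for y
    unfolding \<psi>_def using conv convergent_LIMSEQ_iff by blast
  have "bounded_linear \<psi>"
  proof (rule bounded_linear_intro)
    fix x y
    have "(\<lambda>n. g n \<bullet> (x + y)) \<longlonglongrightarrow> \<psi> x + \<psi> y"
      unfolding inner_add_right by (intro tendsto_add lim\<psi>)
    thus "\<psi> (x + y) = \<psi> x + \<psi> y" using lim\<psi> LIMSEQ_unique by blast
  next
    fix c :: real and x
    have "(\<lambda>n. g n \<bullet> (c *\<^sub>R x)) \<longlonglongrightarrow> c * \<psi> x"
      unfolding inner_scaleR_right by (intro tendsto_mult_left lim\<psi>)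
    with lim\<psi>[of "c *\<^sub>R x"] have "\<psi> (c *\<^sub>R x) = c * \<psi> x" by (rule LIMSEQ_unique)
    thus "\<psi> (c *\<^sub>R x) = c *\<^sub>R \<psi> x" by simp
  next
    fix x
    have "(\<lambda>n. \<bar>g n \<bullet> x\<bar>) \<longlonglongrightarrow> \<bar>\<psi> x\<bar>" by (intro tendsto_rabs lim\<psi>)
    moreover have "\<bar>g n \<bullet> x\<bar> \<le> norm x * B" for n
    proof -
      have "\<bar>g n \<bullet> x\<bar> \<le> norm (g n) * norm x" by (rule Cauchy_Schwarz_ineq2)
      also have "\<dots> \<le> B * norm x" using gB by (simp add: mult_right_mono)
      finally show ?thesis by (simp add: mult.commute)
    qed
    ultimately have "\<bar>\<psi> x\<bar> \<le> norm x * B" by (intro LIMSEQ_le_const2) auto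
    thus "norm (\<psi> x) \<le> norm x * B" by simp
  qed
  from riesz[OF this] obtain z where z: "\<And>y. \<psi> y = z \<bullet> y" by blast
  show ?thesis using r lim\<psi> z unfolding g_def by auto
qed



lemma disc_le:
  fixes a b c :: real
  assumes a: "0 \<le> a" and c: "0 \<le> c" and q: "\<And>t. 0 \<le> a + 2*t*b + t^2*c"
  shows "\<bar>b\<bar> \<le> sqrt a * sqrt c"
proof -
  have "b^2 \<le> a*c"
  proof (cases "c = 0")
    case True
    have "b = 0"
    proof (rule ccontr)
      assume b: "b \<noteq> 0"
      have "0 \<le> a + 2*(-(a+1)/(2*b))*b + (-(a+1)/(2*b))^2*c" by (rule q)
      also have "\<dots> = -1" using b True by (simp add: field_simps)
      finally show False by simp
    qed
    thus ?thesis using a c by simp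
  next
    case False
    hence cp: "c > 0" using c by simp
    define t where "t = -b/c"
    have tt: "t*c = -b" unfolding t_def using cp by simp
    have "0 \<le> c*(a + 2*t*b + t^2*c)" using q[of t] c by simp
    also have "c*(a + 2*t*b + t^2*c) = a*c + 2*b*(t*c) + (t*c)^2"
      by (simp add: algebra_simps power2_eq_square)
    also have "\<dots> = a*c - b^2" by (simp add: tt power2_eq_square)
    finally show ?thesis by simp
  qed
  hence "sqrt (b^2) \<le> sqrt (a*c)" by (rule real_sqrt_le_mono)
  thus ?thesis by (simp add: real_sqrt_mult)
qed

lemma sqint_integrable_mult:
  assumes f: "sqint M f" and g: "sqint M g"
  shows "integrable M (\<lambda>x. f x * g x)"
proof (rule Bochner_Integration.integrable_bound[where f="\<lambda>x. (f x)\<^sup>2 + (g x)\<^sup>2"])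
  show "integrable M (\<lambda>x. (f x)\<^sup>2 + (g x)\<^sup>2)" using f g unfolding sqint_def by auto
  show "(\<lambda>x. f x * g x) \<in> borel_measurable M" using f g unfolding sqint_def by auto
  show "AE x in M. norm (f x * g x) \<le> norm ((f x)\<^sup>2 + (g x)\<^sup>2)"
  proof (rule AE_I2)
    fix x
    have "2 * \<bar>f x * g x\<bar> \<le> (f x)\<^sup>2 + (g x)\<^sup>2"
      using sum_squares_bound[of "\<bar>f x\<bar>" "\<bar>g x\<bar>"] by (simp add: abs_mult power2_abs)
    moreover have "0 \<le> (f x)\<^sup>2 + (g x)\<^sup>2" by simp
    ultimately show "norm (f x * g x) \<le> norm ((f x)\<^sup>2 + (g x)\<^sup>2)" by simp
  qed
qed

lemma sqint_add:
  assumes f: "sqint M f" and g: "sqint M g"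
  shows "sqint M (\<lambda>x. f x + g x)"
proof -
  have "integrable M (\<lambda>x. (f x)\<^sup>2 + 2 * (f x * g x) + (g x)\<^sup>2)"
    using f g sqint_integrable_mult[OF f g] unfolding sqint_def by auto
  moreover have "(\<lambda>x. (f x + g x)\<^sup>2) = (\<lambda>x. (f x)\<^sup>2 + 2 * (f x * g x) + (g x)\<^sup>2)"
    by (simp add: power2_sum algebra_simps)
  ultimately show ?thesis using f g unfolding sqint_def by auto
qed

lemma sqint_scale:
  assumes f: "sqint M f"
  shows "sqint M (\<lambda>x. c * f x)"
  using f unfolding sqint_def by (auto simp: power_mult_distrib)

lemma sqint_diff:
  assumes f: "sqint M f" and g: "sqint M g"
  shows "sqint M (\<lambda>x. f x - g x)"
  using sqint_add[OF f sqint_scale[OF g, of "-1"]] by simp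

lemma l2norm_nonneg: "0 \<le> l2norm M f"
  unfolding l2norm_def by simp

lemma l2norm_sq: "(l2norm M f)\<^sup>2 = (\<integral>x. (f x)\<^sup>2 \<partial>M)"
  unfolding l2norm_def by simp

lemma l2norm_cong: "(\<And>x. x \<in> space M \<Longrightarrow> f x = g x) \<Longrightarrow> l2norm M f = l2norm M g"
  unfolding l2norm_def by (simp cong: Bochner_Integration.integral_cong)

lemma l2_expand:
  assumes f: "sqint M f" and g: "sqint M g"
  shows "(\<integral>x. (f x + t * g x)\<^sup>2 \<partial>M) = (l2norm M f)\<^sup>2 + 2*t*(\<integral>x. f x * g x \<partial>M) + t^2 * (l2norm M g)\<^sup>2"
proof -
  have "(\<lambda>x. (f x + t * g x)\<^sup>2) = (\<lambda>x. (f x)\<^sup>2 + (2*t) * (f x * g x) + t^2 * (g x)\<^sup>2)"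
    by (simp add: power2_sum algebra_simps power2_eq_square)
  moreover have "(\<integral>x. (f x)\<^sup>2 + (2*t) * (f x * g x) + t^2 * (g x)\<^sup>2 \<partial>M)
      = (\<integral>x. (f x)\<^sup>2 \<partial>M) + (2*t) * (\<integral>x. f x * g x \<partial>M) + t^2 * (\<integral>x. (g x)\<^sup>2 \<partial>M)"
    using f g sqint_integrable_mult[OF f g] unfolding sqint_def by simp
  ultimately show ?thesis by (simp add: l2norm_sq)
qed

lemma l2_cs:
  assumes f: "sqint M f" and g: "sqint M g"
  shows "\<bar>\<integral>x. f x * g x \<partial>M\<bar> \<le> l2norm M f * l2norm M g"
proof -
  have "\<bar>\<integral>x. f x * g x \<partial>M\<bar> \<le> sqrt ((l2norm M f)\<^sup>2) * sqrt ((l2norm M g)\<^sup>2)"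
  proof (rule disc_le)
    fix t
    show "0 \<le> (l2norm M f)\<^sup>2 + 2*t*(\<integral>x. f x * g x \<partial>M) + t^2 * (l2norm M g)\<^sup>2"
    proof -
      have "0 \<le> (\<integral>x. (f x + t * g x)\<^sup>2 \<partial>M)" by simp
      thus ?thesis using l2_expand[OF f g, of t] by simp
    qed
  qed auto
  thus ?thesis using l2norm_nonneg[of M f] l2norm_nonneg[of M g] by simp
qed

lemma l2_tri_add:
  assumes f: "sqint M f" and g: "sqint M g"
  shows "l2norm M (\<lambda>x. f x + g x) \<le> l2norm M f + l2norm M g"
proof -
  have "(l2norm M (\<lambda>x. f x + g x))\<^sup>2 = (l2norm M f)\<^sup>2 + 2*(\<integral>x. f x * g x \<partial>M) + (l2norm M g)\<^sup>2"
    using l2_expand[OF f g, of 1] by (simp add: l2norm_sq)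
  also have "\<dots> \<le> (l2norm M f)\<^sup>2 + 2*(l2norm M f * l2norm M g) + (l2norm M g)\<^sup>2"
    using l2_cs[OF f g] by simp
  also have "\<dots> = (l2norm M f + l2norm M g)\<^sup>2" by (simp add: power2_sum)
  finally show ?thesis using l2norm_nonneg
    by (meson add_nonneg_nonneg power2_le_imp_le)
qed

lemma l2_tri:
  assumes f: "sqint M f" and g: "sqint M g" and h: "sqint M h"
  shows "l2norm M (\<lambda>x. f x - h x) \<le> l2norm M (\<lambda>x. f x - g x) + l2norm M (\<lambda>x. g x - h x)"
  using l2_tri_add[OF sqint_diff[OF f g] sqint_diff[OF g h]] by simp

lemma l2norm_sym: "l2norm M (\<lambda>x. f x - g x) = l2norm M (\<lambda>x. g x - f x)"
  unfolding l2norm_def by (simp add: power2_commute)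

lemma l2_conv_cong:
  assumes "\<And>n x. x \<in> space M \<Longrightarrow> F n x = G n x"
  shows "l2_conv M F = l2_conv M G"
proof -
  have "l2norm M (\<lambda>x. F n x - g x) = l2norm M (\<lambda>x. G n x - g x)" for n g
    using assms by (intro l2norm_cong) simp
  thus ?thesis unfolding l2_conv_def by simp
qed

lemma sq_tendsto_zero:
  fixes a b :: "nat \<Rightarrow> real"
  assumes "\<And>n. 0 \<le> a n" "\<And>n. (a n)\<^sup>2 \<le> b n" "b \<longlonglongrightarrow> 0"
  shows "a \<longlonglongrightarrow> 0"
proof (rule real_tendsto_sandwich[of "\<lambda>_. 0" _ _ "\<lambda>n. sqrt (b n)"])
  show "\<forall>\<^sub>F n in sequentially. 0 \<le> a n" using assms by simp
  show "\<forall>\<^sub>F n in sequentially. a n \<le> sqrt (b n)" using assms real_le_rsqrt by (simp add: real_le_rsqrt)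
  show "(\<lambda>n. sqrt (b n)) \<longlonglongrightarrow> 0" using tendsto_real_sqrt[OF assms(3)] by simp
qed simp

lemma not_tendsto_subseq:
  fixes X :: "nat \<Rightarrow> real"
  assumes "\<not> X \<longlonglongrightarrow> 0"
  shows "\<exists>e>0. \<exists>r::nat\<Rightarrow>nat. strict_mono r \<and> (\<forall>n. e \<le> \<bar>X (r n)\<bar>)"
proof -
  from assms obtain e where e: "e > 0" and fr: "\<And>N. \<exists>n\<ge>N. e \<le> \<bar>X n\<bar>"
    unfolding LIMSEQ_iff by (auto simp: not_less)
  have "infinite {n. e \<le> \<bar>X n\<bar>}" using fr by (simp add: infinite_nat_iff_unbounded_le)
  then obtain r :: "nat \<Rightarrow> nat" where "strict_mono r \<and> (\<forall>n. r n \<in> {n. e \<le> \<bar>X n\<bar>})"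
    using infinite_enumerate by blast
  thus ?thesis using e by auto
qed



lemma inner_eqI:
  fixes a b :: "'h::real_inner"
  assumes "\<And>y. a \<bullet> y = b \<bullet> y"
  shows "a = b"
proof -
  have "(a - b) \<bullet> (a - b) = 0" using assms[of "a - b"] by (simp add: inner_diff_left)
  thus ?thesis by simp
qed

lemma emb_diff: "emb feat (a - b) = (\<lambda>s. emb feat a s - emb feat b s)"
  unfolding emb_def by (simp add: inner_diff_left)

lemma emb_add: "emb feat (a + b) = (\<lambda>s. emb feat a s + emb feat b s)"
  unfolding emb_def by (simp add: inner_add_left)

lemma emb_scale: "emb feat (c *\<^sub>R a) = (\<lambda>s. c * emb feat a s)"
  unfolding emb_def by simp

lemma bounded_range_iff: "bounded (range h) \<longleftrightarrow> (\<exists>B. \<forall>n. norm (h n) \<le> B)"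
  unfolding Elementary_Metric_Spaces.bounded_iff by auto

locale rk =
  fixes M :: "'a measure" and k :: "'a \<Rightarrow> 'a \<Rightarrow> real"
    and feat :: "'a \<Rightarrow> 'h::{real_inner, complete_space}"
  assumes kernel: "\<And>s t. s \<in> space M \<Longrightarrow> t \<in> space M \<Longrightarrow> k s t = emb feat (feat s) t"
    and inj_emb: "\<And>h. (\<forall>s\<in>space M. emb feat h s = 0) \<Longrightarrow> h = 0"
    and in_L2: "\<And>h. sqint M (emb feat h)"
    and S_cont: "\<exists>C. \<forall>h. l2norm M (emb feat h) \<le> C * norm h"
begin

definition Cs where "Cs = \<bar>SOME C. \<forall>h. l2norm M (emb feat h) \<le> C * norm h\<bar>"

lemma Cs_nonneg: "0 \<le> Cs" unfolding Cs_def by simp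

lemma S_bound: "l2norm M (emb feat h) \<le> Cs * norm h"
proof -
  have "\<forall>h. l2norm M (emb feat h) \<le> (SOME C. \<forall>h. l2norm M (emb feat h) \<le> C * norm h) * norm h"
    using someI_ex[OF S_cont] .
  hence "l2norm M (emb feat h) \<le> (SOME C. \<forall>h. l2norm M (emb feat h) \<le> C * norm h) * norm h" by blast
  also have "\<dots> \<le> Cs * norm h" unfolding Cs_def by (intro mult_right_mono) auto
  finally show ?thesis .
qed

definition Ad where "Ad g = (SOME z. \<forall>y. (\<integral>t. g t * emb feat y t \<partial>M) = z \<bullet> y)"

lemma Ad: assumes g: "sqint M g" shows "(\<integral>t. g t * emb feat y t \<partial>M) = Ad g \<bullet> y"
proof -
  define \<phi> where "\<phi> y = (\<integral>t. g t * emb feat y t \<partial>M)" for y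
  have int: "integrable M (\<lambda>t. g t * emb feat y t)" for y by (rule sqint_integrable_mult[OF g in_L2])
  have "bounded_linear \<phi>"
  proof (rule bounded_linear_intro)
    fix x y
    show "\<phi> (x + y) = \<phi> x + \<phi> y" unfolding \<phi>_def emb_add
      using int[of x] int[of y] by (simp add: distrib_left)
  next
    fix c :: real and x
    show "\<phi> (c *\<^sub>R x) = c *\<^sub>R \<phi> x" unfolding \<phi>_def emb_scale
      by (simp add: mult.left_commute)
  next
    fix x
    have "\<bar>\<phi> x\<bar> \<le> l2norm M g * l2norm M (emb feat x)" unfolding \<phi>_def by (rule l2_cs[OF g in_L2])
    also have "\<dots> \<le> l2norm M g * (Cs * norm x)" by (intro mult_left_mono S_bound l2norm_nonneg)
    finally show "norm (\<phi> x) \<le> norm x * (l2norm M g * Cs)" by (simp add: ac_simps)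
  qed
  from riesz[OF this] have "\<exists>z. \<forall>y. \<phi> y = z \<bullet> y" .
  from someI_ex[OF this[unfolded \<phi>_def]] show ?thesis unfolding Ad_def by blast
qed

lemma emb_Ad: assumes g: "sqint M g" and s: "s \<in> space M"
  shows "emb feat (Ad g) s = intop M k g s"
proof -
  have "emb feat (Ad g) s = Ad g \<bullet> feat s" by (simp add: emb_def)
  also have "\<dots> = (\<integral>t. g t * emb feat (feat s) t \<partial>M)" by (simp add: Ad[OF g])
  also have "\<dots> = (\<integral>t. k s t * g t \<partial>M)"
    using s kernel by (intro Bochner_Integration.integral_cong) auto
  finally show ?thesis by (simp add: intop_def)
qed

lemma Ad_norm: assumes g: "sqint M g" shows "norm (Ad g) \<le> Cs * l2norm M g"
proof (cases "norm (Ad g) = 0")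
  case True thus ?thesis using Cs_nonneg l2norm_nonneg[of M g] by simp
next
  case False
  have "(norm (Ad g))^2 = Ad g \<bullet> Ad g" by (simp add: power2_norm_eq_inner)
  also have "\<dots> = (\<integral>t. g t * emb feat (Ad g) t \<partial>M)" by (simp add: Ad[OF g])
  also have "\<dots> \<le> l2norm M g * l2norm M (emb feat (Ad g))"
    using l2_cs[OF g in_L2] by (meson abs_le_D1)
  also have "\<dots> \<le> l2norm M g * (Cs * norm (Ad g))" by (intro mult_left_mono S_bound l2norm_nonneg)
  finally have "norm (Ad g) * norm (Ad g) \<le> (Cs * l2norm M g) * norm (Ad g)"
    by (simp add: power2_eq_square ac_simps)
  thus ?thesis using False by (simp add: mult_le_cancel_right)
qed

lemma Ad_diff: assumes f: "sqint M f" and g: "sqint M g"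
  shows "Ad (\<lambda>x. f x - g x) = Ad f - Ad g"
proof (rule inner_eqI)
  fix y
  have "Ad (\<lambda>x. f x - g x) \<bullet> y = (\<integral>t. (f t - g t) * emb feat y t \<partial>M)"
    by (simp add: Ad[OF sqint_diff[OF f g]])
  also have "\<dots> = (\<integral>t. f t * emb feat y t \<partial>M) - (\<integral>t. g t * emb feat y t \<partial>M)"
    using sqint_integrable_mult[OF f in_L2] sqint_integrable_mult[OF g in_L2]
    by (simp add: left_diff_distrib)
  also have "\<dots> = (Ad f - Ad g) \<bullet> y" by (simp add: Ad[OF f] Ad[OF g] inner_diff_left)
  finally show "Ad (\<lambda>x. f x - g x) \<bullet> y = (Ad f - Ad g) \<bullet> y" .
qed

definition T where "T x = Ad (emb feat x)"

lemma T_inner: "T x \<bullet> y = (\<integral>t. emb feat x t * emb feat y t \<partial>M)"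
  unfolding T_def by (simp add: Ad[OF in_L2])

lemma T_sym: "T x \<bullet> y = T y \<bullet> x"
  unfolding T_inner by (simp add: mult.commute)

lemma T_diff: "T (a - b) = T a - T b"
  unfolding T_def emb_diff by (rule Ad_diff[OF in_L2 in_L2])

lemma S_sq: "(l2norm M (emb feat x))\<^sup>2 = T x \<bullet> x"
  unfolding l2norm_sq T_inner by (simp add: power2_eq_square)

lemma T_sq: "(norm (T x))\<^sup>2 \<le> l2norm M (emb feat x) * l2norm M (emb feat (T x))"
proof -
  have "(norm (T x))\<^sup>2 = T x \<bullet> T x" by (simp add: power2_norm_eq_inner)
  also have "\<dots> = (\<integral>t. emb feat x t * emb feat (T x) t \<partial>M)" by (rule T_inner)
  also have "\<dots> \<le> l2norm M (emb feat x) * l2norm M (emb feat (T x))"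
    using l2_cs[OF in_L2 in_L2] by (meson abs_le_D1)
  finally show ?thesis .
qed

lemma emb_T: "s \<in> space M \<Longrightarrow> emb feat (T x) s = intop M k (emb feat x) s"
  unfolding T_def by (rule emb_Ad[OF in_L2])

lemma intop_sq: "(\<integral>s. (intop M k (emb feat x) s)\<^sup>2 \<partial>M) = (l2norm M (emb feat (T x)))\<^sup>2"
  unfolding l2norm_sq by (intro Bochner_Integration.integral_cong) (auto simp: emb_T)

lemma weak_zero:
  fixes h :: "nat \<Rightarrow> 'h"
  assumes B: "\<And>n. norm (h n) \<le> B"
    and pw: "\<forall>s\<in>space M. (\<lambda>n. emb feat (h n) s) \<longlonglongrightarrow> 0"
  shows "(\<lambda>n. h n \<bullet> y) \<longlonglongrightarrow> 0"
proof (rule ccontr)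
  assume "\<not> (\<lambda>n. h n \<bullet> y) \<longlonglongrightarrow> 0"
  from not_tendsto_subseq[OF this] obtain e and r :: "nat \<Rightarrow> nat" where e: "e > 0" and r: "strict_mono r"
    and ge: "\<And>n. e \<le> \<bar>h (r n) \<bullet> y\<bar>" by blast
  have B': "norm (h (r n)) \<le> B" for n by (rule B)
  from weak_compact[of "h \<circ> r" B] B' obtain q :: "nat \<Rightarrow> nat" and x where q: "strict_mono q"
    and wx: "\<And>y. (\<lambda>n. (h \<circ> r) (q n) \<bullet> y) \<longlonglongrightarrow> x \<bullet> y" by auto
  have "x = 0"
  proof (rule inj_emb, intro ballI)
    fix s assume s: "s \<in> space M"
    have "(\<lambda>n. emb feat (h n) s) \<longlonglongrightarrow> 0" using pw s by blast
    hence "((\<lambda>n. emb feat (h n) s) \<circ> (r \<circ> q)) \<longlonglongrightarrow> 0"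
      by (rule LIMSEQ_subseq_LIMSEQ) (intro strict_mono_o r q)
    moreover have "(\<lambda>n. (h \<circ> r) (q n) \<bullet> feat s) \<longlonglongrightarrow> x \<bullet> feat s" by (rule wx)
    ultimately have "x \<bullet> feat s = 0" using LIMSEQ_unique by (fastforce simp: emb_def o_def)
    thus "emb feat x s = 0" by (simp add: emb_def)
  qed
  with wx[of y] have "(\<lambda>n. h (r (q n)) \<bullet> y) \<longlonglongrightarrow> 0" by (simp add: o_def)
  hence "(\<lambda>n. \<bar>h (r (q n)) \<bullet> y\<bar>) \<longlonglongrightarrow> 0" using tendsto_rabs_zero by blast
  moreover have "e \<le> \<bar>h (r (q n)) \<bullet> y\<bar>" for n by (rule ge)
  ultimately have "e \<le> 0" by (intro LIMSEQ_le_const[of "\<lambda>n. \<bar>h (r (q n)) \<bullet> y\<bar>"]) auto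
  thus False using e by simp
qed

end


context rk begin

lemma S_LL: assumes cS: "compact_S M feat" shows "compact_TLL M k"
  unfolding compact_TLL_def
proof (intro allI impI)
  fix f :: "nat \<Rightarrow> 'a \<Rightarrow> real" assume "(\<forall>n. sqint M (f n)) \<and> (\<exists>C. \<forall>n. l2norm M (f n) \<le> C)"
  then obtain C0 where sf: "\<And>n. sqint M (f n)" and C0: "\<And>n. l2norm M (f n) \<le> C0" by blast
  define h where "h n = Ad (f n)" for n
  have "bounded (range h)" unfolding bounded_range_iff
  proof (intro exI allI)
    fix n
    have "norm (h n) \<le> Cs * l2norm M (f n)" unfolding h_def by (rule Ad_norm[OF sf])
    also have "\<dots> \<le> Cs * C0" by (intro mult_left_mono C0 Cs_nonneg)
    finally show "norm (h n) \<le> Cs * C0" .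
  qed
  from cS[unfolded compact_S_def, rule_format, OF this] obtain r where
    r: "strict_mono r" and c: "l2_conv M (\<lambda>n. emb feat (h (r n)))" by blast
  have "l2_conv M (\<lambda>n. emb feat (h (r n))) = l2_conv M (\<lambda>n. intop M k (f (r n)))"
    by (rule l2_conv_cong) (simp add: h_def emb_Ad[OF sf])
  with r c show "\<exists>r. strict_mono r \<and> l2_conv M (\<lambda>n. intop M k (f (r n)))" by blast
qed

lemma LL_HL: assumes cL: "compact_TLL M k" shows "compact_THL M k feat"
  unfolding compact_THL_def
proof (intro allI impI)
  fix h :: "nat \<Rightarrow> 'h" assume "bounded (range h)"
  then obtain B where B: "\<And>n. norm (h n) \<le> B" unfolding bounded_range_iff by blast
  have "(\<forall>n. sqint M (emb feat (h n))) \<and> (\<exists>C. \<forall>n. l2norm M (emb feat (h n)) \<le> C)"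
  proof (intro conjI allI exI)
    fix n show "sqint M (emb feat (h n))" by (rule in_L2)
    have "l2norm M (emb feat (h n)) \<le> Cs * norm (h n)" by (rule S_bound)
    also have "\<dots> \<le> Cs * B" by (intro mult_left_mono B Cs_nonneg)
    finally show "l2norm M (emb feat (h n)) \<le> Cs * B" .
  qed
  from cL[unfolded compact_TLL_def, rule_format, OF this]
  show "\<exists>r. strict_mono r \<and> l2_conv M (\<lambda>n. intop M k (emb feat (h (r n))))" .
qed

lemma HL_HH: assumes cL: "compact_THL M k feat" shows "compact_THH M k feat"
  unfolding compact_THH_def
proof (intro allI impI)
  fix h :: "nat \<Rightarrow> 'h" assume bh: "bounded (range h)"
  then obtain B where B: "\<And>n. norm (h n) \<le> B" unfolding bounded_range_iff by blast
  have B0: "0 \<le> B" using B[of 0] norm_ge_zero order_trans by blast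
  from cL[unfolded compact_THL_def, rule_format, OF bh] obtain r :: "nat \<Rightarrow> nat" and g where
    r: "strict_mono r" and sg: "sqint M g"
    and cv: "(\<lambda>n. l2norm M (\<lambda>x. intop M k (emb feat (h (r n))) x - g x)) \<longlonglongrightarrow> 0"
    unfolding l2_conv_def by blast
  define G where "G n = T (h (r n))" for n
  define u where "u n = l2norm M (\<lambda>x. emb feat (G n) x - g x)" for n
  have u_eq: "u n = l2norm M (\<lambda>x. intop M k (emb feat (h (r n))) x - g x)" for n
    unfolding u_def G_def by (rule l2norm_cong) (simp add: emb_T)
  have u0: "u \<longlonglongrightarrow> 0" using cv by (simp add: u_eq[abs_def])
  have un: "0 \<le> u n" for n unfolding u_def by (rule l2norm_nonneg)
  define K where "K = 2*Cs*B + 1"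
  have K: "K > 0" unfolding K_def using Cs_nonneg B0 by (simp add: add_nonneg_pos)
  have key: "(norm (G a - G b))\<^sup>2 \<le> K * (u a + u b)" for a b
  proof -
    define d where "d = h (r a) - h (r b)"
    have "norm d \<le> 2*B" unfolding d_def using B[of "r a"] B[of "r b"] norm_triangle_ineq4 order_trans
      by (smt (verit))
    have "G a - G b = T d" unfolding G_def d_def by (simp add: T_diff)
    hence "(norm (G a - G b))\<^sup>2 \<le> l2norm M (emb feat d) * l2norm M (emb feat (G a - G b))"
      using T_sq[of d] by simp
    also have "\<dots> \<le> (Cs * (2*B)) * (u a + u b)"
    proof (rule mult_mono)
      show "l2norm M (emb feat d) \<le> Cs * (2*B)"
        using S_bound[of d] \<open>norm d \<le> 2*B\<close> Cs_nonneg by (meson mult_left_mono order_trans)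
      have "l2norm M (emb feat (G a - G b)) = l2norm M (\<lambda>x. emb feat (G a) x - emb feat (G b) x)"
        by (simp add: emb_diff)
      also have "\<dots> \<le> l2norm M (\<lambda>x. emb feat (G a) x - g x) + l2norm M (\<lambda>x. g x - emb feat (G b) x)"
        by (rule l2_tri[OF in_L2 sg in_L2])
      also have "\<dots> = u a + u b" unfolding u_def by (simp add: l2norm_sym[of M g])
      finally show "l2norm M (emb feat (G a - G b)) \<le> u a + u b" .
    qed (auto simp: Cs_nonneg B0 l2norm_nonneg)
    also have "\<dots> \<le> K * (u a + u b)" unfolding K_def using un[of a] un[of b]
      by (intro mult_right_mono) auto
    finally show ?thesis .
  qed
  have "Cauchy G"
  proof (rule metric_CauchyI)
    fix e :: real assume e: "e > 0"
    have "e^2/(2*K) > 0" using e K by simp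
    with u0 obtain N where N: "\<And>n. n \<ge> N \<Longrightarrow> \<bar>u n\<bar> < e^2/(2*K)"
      unfolding LIMSEQ_iff by auto
    show "\<exists>M. \<forall>a\<ge>M. \<forall>b\<ge>M. dist (G a) (G b) < e"
    proof (intro exI allI impI)
      fix a b assume ab: "a \<ge> N" "b \<ge> N"
      have "u a + u b < e^2/K" using N[OF ab(1)] N[OF ab(2)] un[of a] un[of b] by simp
      hence "K * (u a + u b) < e^2" using K by (simp add: field_simps)
      with key[of a b] have "(dist (G a) (G b))\<^sup>2 < e^2" by (simp add: dist_norm)
      thus "dist (G a) (G b) < e" using e by (meson power2_less_imp_less less_imp_le)
    qed
  qed
  then obtain gg where "G \<longlonglongrightarrow> gg" using Cauchy_convergent_iff convergent_def by blast
  moreover have "\<forall>n. \<forall>s\<in>space M. emb feat (G n) s = intop M k (emb feat (h (r n))) s"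
    unfolding G_def by (simp add: emb_T)
  ultimately show "\<exists>r G g. strict_mono r \<and>
           (\<forall>n. \<forall>s\<in>space M. emb feat (G n) s = intop M k (emb feat (h (r n))) s) \<and>
           G \<longlonglongrightarrow> g" using r by blast
qed

end


context rk begin

lemma tendsto_norm_diff: "(X \<longlonglongrightarrow> (l::'h)) \<Longrightarrow> (\<lambda>n. norm (X n - l)) \<longlonglongrightarrow> 0"
  using Lim_null tendsto_norm_zero by blast

lemma HH_S: assumes cH: "compact_THH M k feat" shows "compact_S M feat"
  unfolding compact_S_def
proof (intro allI impI)
  fix h :: "nat \<Rightarrow> 'h" assume bh: "bounded (range h)"
  then obtain B where B: "\<And>n. norm (h n) \<le> B" unfolding bounded_range_iff by blast
  from cH[unfolded compact_THH_def, rule_format, OF bh] obtain r :: "nat \<Rightarrow> nat" and G g where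
    r: "strict_mono r" and eq: "\<forall>n. \<forall>s\<in>space M. emb feat (G n) s = intop M k (emb feat (h (r n))) s"
    and Gg: "G \<longlonglongrightarrow> g" by blast
  have GT: "G n = T (h (r n))" for n
  proof -
    have "G n - T (h (r n)) = 0"
      by (rule inj_emb) (simp add: emb_diff emb_T eq)
    thus ?thesis by simp
  qed
  have B': "norm ((h \<circ> r) n) \<le> B" for n using B by simp
  from weak_compact[of "h \<circ> r" B, OF B'] obtain q :: "nat \<Rightarrow> nat" and x where q: "strict_mono q"
    and wx: "\<And>y. (\<lambda>n. h (r (q n)) \<bullet> y) \<longlonglongrightarrow> x \<bullet> y" by auto
  have Gq: "(\<lambda>n. G (q n)) \<longlonglongrightarrow> g" using LIMSEQ_subseq_LIMSEQ[OF Gg q] by (simp add: o_def)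
  have gT: "g = T x"
  proof (rule inner_eqI)
    fix y
    have "(\<lambda>n. G (q n) \<bullet> y) \<longlonglongrightarrow> g \<bullet> y" by (intro tendsto_inner Gq tendsto_const)
    moreover have "(\<lambda>n. G (q n) \<bullet> y) \<longlonglongrightarrow> T x \<bullet> y"
    proof -
      have "G (q n) \<bullet> y = h (r (q n)) \<bullet> T y" for n
        using T_sym[of "h (r (q n))" y] inner_commute[of "T y" "h (r (q n))"] by (simp add: GT)
      moreover have "T x \<bullet> y = x \<bullet> T y"
      proof -
        have "T x \<bullet> y = T y \<bullet> x" by (rule T_sym)
        also have "\<dots> = x \<bullet> T y" by (rule inner_commute)
        finally show ?thesis .
      qed
      ultimately show ?thesis using wx[of "T y"] by simp
    qed
    ultimately show "g \<bullet> y = T x \<bullet> y" by (rule LIMSEQ_unique)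
  qed
  define d where "d n = h (r (q n)) - x" for n
  define B1 where "B1 = B + norm x"
  have dB: "norm (d n) \<le> B1" for n unfolding d_def B1_def
    using B[of "r (q n)"] norm_triangle_ineq4[of "h (r (q n))" x] by simp
  have Td: "(\<lambda>n. norm (T (d n))) \<longlonglongrightarrow> 0"
  proof -
    have "(\<lambda>n. T (h (r (q n)))) \<longlonglongrightarrow> T x" using Gq gT by (simp add: GT)
    from tendsto_norm_diff[OF this] show ?thesis by (simp add: d_def T_diff)
  qed
  have "(\<lambda>n. l2norm M (emb feat (d n))) \<longlonglongrightarrow> 0"
  proof (rule sq_tendsto_zero)
    fix n
    show "0 \<le> l2norm M (emb feat (d n))" by (rule l2norm_nonneg)
    have "(l2norm M (emb feat (d n)))\<^sup>2 = T (d n) \<bullet> d n" by (rule S_sq)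
    also have "\<dots> \<le> norm (T (d n)) * norm (d n)" by (rule real_inner_class.Cauchy_Schwarz_ineq2[THEN abs_le_D1])
    also have "\<dots> \<le> norm (T (d n)) * B1" by (intro mult_left_mono dB) simp
    finally show "(l2norm M (emb feat (d n)))\<^sup>2 \<le> norm (T (d n)) * B1" .
  next
    show "(\<lambda>n. norm (T (d n)) * B1) \<longlonglongrightarrow> 0" using tendsto_mult_left_zero[OF Td] by simp
  qed
  hence "(\<lambda>n. l2norm M (\<lambda>s. emb feat (h (r (q n))) s - emb feat x s)) \<longlonglongrightarrow> 0"
    by (simp add: d_def emb_diff)
  hence "l2_conv M (\<lambda>n. emb feat (h (r (q n))))" unfolding l2_conv_def using in_L2 by blast
  moreover have "strict_mono (\<lambda>n. r (q n))" using strict_mono_o[OF r q] by (simp add: o_def)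
  ultimately show "\<exists>r. strict_mono r \<and> l2_conv M (\<lambda>n. emb feat (h (r n)))" by blast
qed

lemma S_P: assumes cS: "compact_S M feat"
  shows "\<forall>h::nat \<Rightarrow> 'h. bounded (range h) \<and>
               (\<forall>s\<in>space M. (\<lambda>n. emb feat (h n) s) \<longlonglongrightarrow> 0) \<longrightarrow>
               (\<lambda>n. \<integral>s. (intop M k (emb feat (h n)) s)\<^sup>2 \<partial>M) \<longlonglongrightarrow> 0"
proof (intro allI impI, elim conjE)
  fix h :: "nat \<Rightarrow> 'h" assume bh: "bounded (range h)" and pw: "\<forall>s\<in>space M. (\<lambda>n. emb feat (h n) s) \<longlonglongrightarrow> 0"
  then obtain B where B: "\<And>n. norm (h n) \<le> B" unfolding bounded_range_iff by blast
  have wz: "(\<lambda>n. h n \<bullet> y) \<longlonglongrightarrow> 0" for y by (rule weak_zero[OF B pw])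
  have Tz: "(\<lambda>n. norm (T (h n))) \<longlonglongrightarrow> 0"
  proof (rule ccontr)
    assume "\<not> (\<lambda>n. norm (T (h n))) \<longlonglongrightarrow> 0"
    from not_tendsto_subseq[OF this] obtain e and r :: "nat \<Rightarrow> nat" where e: "e > 0"
      and r: "strict_mono r" and ge: "\<And>n. e \<le> \<bar>norm (T (h (r n)))\<bar>" by blast
    have "bounded (range (\<lambda>n. h (r n)))" unfolding bounded_range_iff using B by blast
    from cS[unfolded compact_S_def, rule_format, OF this] obtain q :: "nat \<Rightarrow> nat" and g where
      q: "strict_mono q" and sg: "sqint M g"
      and cv: "(\<lambda>n. l2norm M (\<lambda>x. emb feat (h (r (q n))) x - g x)) \<longlonglongrightarrow> 0"
      unfolding l2_conv_def by blast
    have "(\<lambda>n. norm (T (h (r (q n))) - Ad g)) \<longlonglongrightarrow> 0"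
    proof (rule real_tendsto_sandwich[of "\<lambda>_. 0" _ _ "\<lambda>n. Cs * l2norm M (\<lambda>x. emb feat (h (r (q n))) x - g x)"])
      show "\<forall>\<^sub>F n in sequentially. 0 \<le> norm (T (h (r (q n))) - Ad g)" by simp
      show "\<forall>\<^sub>F n in sequentially. norm (T (h (r (q n))) - Ad g) \<le> Cs * l2norm M (\<lambda>x. emb feat (h (r (q n))) x - g x)"
        unfolding T_def using Ad_diff[OF in_L2 sg] Ad_norm[OF sqint_diff[OF in_L2 sg]] by simp
      show "(\<lambda>n. Cs * l2norm M (\<lambda>x. emb feat (h (r (q n))) x - g x)) \<longlonglongrightarrow> 0"
        using tendsto_mult_right_zero[OF cv] by simp
    qed simp
    hence lim: "(\<lambda>n. T (h (r (q n)))) \<longlonglongrightarrow> Ad g" using Lim_null tendsto_norm_zero_iff by blast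
    have "Ad g = 0"
    proof (rule inner_eqI)
      fix y
      have "(\<lambda>n. T (h (r (q n))) \<bullet> y) \<longlonglongrightarrow> Ad g \<bullet> y" by (intro tendsto_inner lim tendsto_const)
      moreover have "(\<lambda>n. T (h (r (q n))) \<bullet> y) \<longlonglongrightarrow> 0"
      proof -
        have "(\<lambda>n. h n \<bullet> T y) \<longlonglongrightarrow> 0" by (rule wz)
        hence "((\<lambda>n. h n \<bullet> T y) \<circ> (r \<circ> q)) \<longlonglongrightarrow> 0" by (intro LIMSEQ_subseq_LIMSEQ strict_mono_o r q)
        moreover have "T (h (r (q n))) \<bullet> y = h (r (q n)) \<bullet> T y" for n
          using T_sym[of "h (r (q n))" y] inner_commute[of "T y" "h (r (q n))"] by simp
        ultimately show ?thesis by (simp add: o_def)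
      qed
      ultimately show "Ad g \<bullet> y = 0 \<bullet> y" using LIMSEQ_unique by fastforce
    qed
    with lim have "(\<lambda>n. norm (T (h (r (q n))))) \<longlonglongrightarrow> 0" using tendsto_norm_zero by fastforce
    moreover have "e \<le> norm (T (h (r (q n))))" for n using ge[of "q n"] by simp
    ultimately have "e \<le> 0" by (intro LIMSEQ_le_const[of "\<lambda>n. norm (T (h (r (q n))))"]) auto
    thus False using e by simp
  qed
  show "(\<lambda>n. \<integral>s. (intop M k (emb feat (h n)) s)\<^sup>2 \<partial>M) \<longlonglongrightarrow> 0"
    unfolding intop_sq
  proof (rule real_tendsto_sandwich[of "\<lambda>_. 0" _ _ "\<lambda>n. (Cs * norm (T (h n)))\<^sup>2"])
    show "\<forall>\<^sub>F n in sequentially. 0 \<le> (l2norm M (emb feat (T (h n))))\<^sup>2" by simp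
    show "\<forall>\<^sub>F n in sequentially. (l2norm M (emb feat (T (h n))))\<^sup>2 \<le> (Cs * norm (T (h n)))\<^sup>2"
      by (intro always_eventually allI power_mono S_bound l2norm_nonneg)
    show "(\<lambda>n. (Cs * norm (T (h n)))\<^sup>2) \<longlonglongrightarrow> 0"
      using tendsto_power[OF tendsto_mult_right_zero[OF Tz, of Cs], of 2] by simp
  qed simp
qed

lemma P_S:
  assumes P: "\<forall>h::nat \<Rightarrow> 'h. bounded (range h) \<and>
               (\<forall>s\<in>space M. (\<lambda>n. emb feat (h n) s) \<longlonglongrightarrow> 0) \<longrightarrow>
               (\<lambda>n. \<integral>s. (intop M k (emb feat (h n)) s)\<^sup>2 \<partial>M) \<longlonglongrightarrow> 0"
  shows "compact_S M feat"
  unfolding compact_S_def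
proof (intro allI impI)
  fix h :: "nat \<Rightarrow> 'h" assume bh: "bounded (range h)"
  then obtain B where B: "\<And>n. norm (h n) \<le> B" unfolding bounded_range_iff by blast
  from weak_compact[of h B, OF B] obtain r :: "nat \<Rightarrow> nat" and x where r: "strict_mono r"
    and wx: "\<And>y. (\<lambda>n. h (r n) \<bullet> y) \<longlonglongrightarrow> x \<bullet> y" by auto
  define d where "d n = h (r n) - x" for n
  define B1 where "B1 = B + norm x"
  have dB: "norm (d n) \<le> B1" for n unfolding d_def B1_def
    using B[of "r n"] norm_triangle_ineq4[of "h (r n)" x] by simp
  have B10: "0 \<le> B1" using dB[of 0] norm_ge_zero order_trans by blast
  have "bounded (range d)" unfolding bounded_range_iff using dB by blast
  moreover have "\<forall>s\<in>space M. (\<lambda>n. emb feat (d n) s) \<longlonglongrightarrow> 0"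
  proof
    fix s
    have "(\<lambda>n. h (r n) \<bullet> feat s - x \<bullet> feat s) \<longlonglongrightarrow> x \<bullet> feat s - x \<bullet> feat s"
      by (intro tendsto_diff wx tendsto_const)
    thus "(\<lambda>n. emb feat (d n) s) \<longlonglongrightarrow> 0" by (simp add: d_def emb_def inner_diff_left)
  qed
  ultimately have "(\<lambda>n. \<integral>s. (intop M k (emb feat (d n)) s)\<^sup>2 \<partial>M) \<longlonglongrightarrow> 0" using P by blast
  hence ST0: "(\<lambda>n. (l2norm M (emb feat (T (d n))))\<^sup>2) \<longlonglongrightarrow> 0" unfolding intop_sq .
  have ST: "(\<lambda>n. l2norm M (emb feat (T (d n)))) \<longlonglongrightarrow> 0"
  proof (rule sq_tendsto_zero)
    fix n
    show "0 \<le> l2norm M (emb feat (T (d n)))" by (rule l2norm_nonneg)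
    show "(l2norm M (emb feat (T (d n))))\<^sup>2 \<le> (l2norm M (emb feat (T (d n))))\<^sup>2" by simp
  next
    show "(\<lambda>n. (l2norm M (emb feat (T (d n))))\<^sup>2) \<longlonglongrightarrow> 0" by (rule ST0)
  qed
  have Td: "(\<lambda>n. norm (T (d n))) \<longlonglongrightarrow> 0"
  proof (rule sq_tendsto_zero)
    fix n show "0 \<le> norm (T (d n))" by simp
    have "(norm (T (d n)))\<^sup>2 \<le> l2norm M (emb feat (d n)) * l2norm M (emb feat (T (d n)))" by (rule T_sq)
    also have "\<dots> \<le> (Cs * B1) * l2norm M (emb feat (T (d n)))"
    proof (intro mult_right_mono l2norm_nonneg)
      show "l2norm M (emb feat (d n)) \<le> Cs * B1"
        using S_bound[of "d n"] dB[of n] Cs_nonneg by (meson mult_left_mono order_trans)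
    qed
    finally show "(norm (T (d n)))\<^sup>2 \<le> (Cs * B1) * l2norm M (emb feat (T (d n)))" .
  next
    show "(\<lambda>n. (Cs * B1) * l2norm M (emb feat (T (d n)))) \<longlonglongrightarrow> 0"
      using tendsto_mult_right_zero[OF ST] by simp
  qed
  have "(\<lambda>n. l2norm M (emb feat (d n))) \<longlonglongrightarrow> 0"
  proof (rule sq_tendsto_zero)
    fix n
    show "0 \<le> l2norm M (emb feat (d n))" by (rule l2norm_nonneg)
    have "(l2norm M (emb feat (d n)))\<^sup>2 = T (d n) \<bullet> d n" by (rule S_sq)
    also have "\<dots> \<le> norm (T (d n)) * norm (d n)" by (rule real_inner_class.Cauchy_Schwarz_ineq2[THEN abs_le_D1])
    also have "\<dots> \<le> norm (T (d n)) * B1" by (intro mult_left_mono dB) simp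
    finally show "(l2norm M (emb feat (d n)))\<^sup>2 \<le> norm (T (d n)) * B1" .
  next
    show "(\<lambda>n. norm (T (d n)) * B1) \<longlonglongrightarrow> 0" using tendsto_mult_left_zero[OF Td] by simp
  qed
  hence "(\<lambda>n. l2norm M (\<lambda>s. emb feat (h (r n)) s - emb feat x s)) \<longlonglongrightarrow> 0"
    by (simp add: d_def emb_diff)
  hence "l2_conv M (\<lambda>n. emb feat (h (r n)))" unfolding l2_conv_def using in_L2 by blast
  with r show "\<exists>r. strict_mono r \<and> l2_conv M (\<lambda>n. emb feat (h (r n)))" by blast
qed

end

theorem theorem1:
  fixes M :: "'a measure" and k :: "'a \<Rightarrow> 'a \<Rightarrow> real"
    and feat :: "'a \<Rightarrow> 'h::{real_inner, complete_space}"
  assumes nonempty: "space M \<noteq> {}"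
    and kernel: "\<And>s t. s \<in> space M \<Longrightarrow> t \<in> space M \<Longrightarrow> k s t = emb feat (feat s) t"
    and inj_emb: "\<And>h. (\<forall>s\<in>space M. emb feat h s = 0) \<Longrightarrow> h = 0"
    and sigma_fin: "sigma_finite_measure M"
    and in_L2: "\<And>h. sqint M (emb feat h)"
    and S_cont: "\<exists>C. \<forall>h. l2norm M (emb feat h) \<le> C * norm h"
  shows "(compact_S M feat \<longleftrightarrow> compact_THH M k feat)
       \<and> (compact_S M feat \<longleftrightarrow> compact_THL M k feat)
       \<and> (compact_S M feat \<longleftrightarrow> compact_TLL M k)
       \<and> (compact_S M feat \<longleftrightarrow>
           (\<forall>h::nat \<Rightarrow> 'h. bounded (range h) \<and>
               (\<forall>s\<in>space M. (\<lambda>n. emb feat (h n) s) \<longlonglongrightarrow> 0) \<longrightarrow>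
               (\<lambda>n. \<integral>s. (intop M k (emb feat (h n)) s)\<^sup>2 \<partial>M) \<longlonglongrightarrow> 0))"
proof -
  interpret rk M k feat
    by unfold_locales (use kernel inj_emb in_L2 S_cont in auto)
  have a: "compact_S M feat \<Longrightarrow> compact_TLL M k" by (rule S_LL)
  have b: "compact_TLL M k \<Longrightarrow> compact_THL M k feat" by (rule LL_HL)
  have c: "compact_THL M k feat \<Longrightarrow> compact_THH M k feat" by (rule HL_HH)
  have d: "compact_THH M k feat \<Longrightarrow> compact_S M feat" by (rule HH_S)
  show ?thesis using a b c d S_P P_S by blast
qed

end
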